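(* Let $W$ satisfy the hypotheses in the context. For $G=(g_{ij})\in\mathbb R^{2\times2}$ with $|G|$ small, $$W_\triangle(\mathbf{Id}+G)=\tfrac12Q(G)+o(|G|^2),\qquad Q(G)=\frac{3\alpha}{16}\Big(3g_{11}^2+3g_{22}^2+2g_{11}g_{22}+4\Big(\frac{g_{12}+g_{21}}2\Big)^2\Big).$$ Moreover, $Q(G)$ depends only on the symmetric part $(G^T+G)/2$, $Q$ is positive semidefinite (hence convex) on $\mathbb R^{2\times2}$, and positive definite and strictly convex on the subspace $\mathbb R^{2\times2}_{\rm sym}$ of symmetric matrices.
   Context: $R_{\mathcal L}\in SO(2)$, $\mathbf v_1=R_{\mathcal L}\mathbf e_1$, $\mathbf v_2=R_{\mathcal L}(\tfrac12,\tfrac{\sqrt3}2)^T$. $W:[0,\infty)\to[0,\infty]$ satisfies: $W\ge0$ with $W(r)=0$ iff $r=1$; $W$ continuous on $[0,\infty)$ and $C^2$ near $1$ with $\alpha:=W''(1)>0$; $\lim_{r\to\infty}W(r)=\beta$. $W_\triangle(F)=\frac12\big(W(|F\mathbf v_1|)+W(|F\mathbf v_2|)+W(|F(\mathbf v_2-\mathbf v_1)|)\big)$ for $F\in\mathbb R^{2\times2}$. *)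

theory Defs
  imports "HOL-Analysis.Analysis" "HOL-Library.Landau_Symbols"
begin

definition lat_v1 :: "real^2^2 \<Rightarrow> real^2" where
  "lat_v1 R = R *v vector [1, 0]"

definition lat_v2 :: "real^2^2 \<Rightarrow> real^2" where
  "lat_v2 R = R *v vector [1/2, sqrt 3 / 2]"

definition W_tri :: "(real \<Rightarrow> ereal) \<Rightarrow> real^2^2 \<Rightarrow> real^2^2 \<Rightarrow> ereal" where
  "W_tri W R F = ereal (1/2) *
     (W (norm (F *v lat_v1 R)) + W (norm (F *v lat_v2 R))
      + W (norm (F *v (lat_v2 R - lat_v1 R))))"

definition Qform :: "real \<Rightarrow> real^2^2 \<Rightarrow> real" where
  "Qform \<alpha> G = 3 * \<alpha> / 16 *
     (3 * (G$1$1)^2 + 3 * (G$2$2)^2 + 2 * (G$1$1) * (G$2$2)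
      + 4 * ((G$1$2 + G$2$1) / 2)^2)"

definition strictly_convex_on :: "'a::real_vector set \<Rightarrow> ('a \<Rightarrow> real) \<Rightarrow> bool" where
  "strictly_convex_on S f \<longleftrightarrow>
     (\<forall>x\<in>S. \<forall>y\<in>S. x \<noteq> y \<longrightarrow> (\<forall>t. 0 < t \<and> t < 1 \<longrightarrow>
        f ((1 - t) *\<^sub>R x + t *\<^sub>R y) < (1 - t) * f x + t * f y))"

end

theory Submission
  imports Defs
begin


lemma taylor1:
  fixes w w' w'' :: "real \<Rightarrow> real"
  assumes dpos: "\<delta> > 0"
    and d1: "\<forall>r\<in>ball 1 \<delta>. (w has_real_derivative w' r) (at r)"
    and d2: "\<forall>r\<in>ball 1 \<delta>. (w' has_real_derivative w'' r) (at r)"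
    and C2: "continuous_on (ball 1 \<delta>) w''"
    and w1: "w 1 = 0" and w'1: "w' 1 = 0" and cpos: "c > 0"
  shows "\<exists>d>0. \<forall>e. \<bar>e\<bar> < d \<longrightarrow> \<bar>w (1+e) - w'' 1 / 2 * e^2\<bar> \<le> c * e^2"
proof -
  have "isCont w'' 1" using C2 dpos
    by (simp add: continuous_on_eq_continuous_at)
  then obtain d0 where d0: "d0 > 0" "\<forall>t. \<bar>t - 1\<bar> < d0 \<longrightarrow> \<bar>w'' t - w'' 1\<bar> < 2*c"
    using cpos unfolding isCont_def LIM_eq
    by (metis dist_real_def mult_pos_pos zero_less_numeral real_norm_def abs_zero diff_self order_less_irrefl
        linorder_neqE_linordered_idom)
  define d where "d = min d0 \<delta>"
  have "d > 0" using d0 dpos by (simp add: d_def)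
  moreover have "\<bar>w (1+e) - w'' 1 / 2 * e^2\<bar> \<le> c * e^2" if e: "\<bar>e\<bar> < d" for e
  proof (cases "e = 0")
    case True then show ?thesis using w1 by simp
  next
    case False
    define diff where "diff = (\<lambda>m::nat. if m = 0 then w else if m = 1 then w' else w'')"
    have D: "\<forall>m t. m < 2 \<and> 1 - \<bar>e\<bar> \<le> t \<and> t \<le> 1 + \<bar>e\<bar> \<longrightarrow> DERIV (diff m) t :> diff (Suc m) t"
    proof (intro allI impI)
      fix m :: nat and t :: real assume h: "m < 2 \<and> 1 - \<bar>e\<bar> \<le> t \<and> t \<le> 1 + \<bar>e\<bar>"
      then have "t \<in> ball 1 \<delta>" using e by (auto simp: d_def dist_real_def)
      then show "DERIV (diff m) t :> diff (Suc m) t"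
        using h d1 d2 by (cases m) (auto simp: diff_def)
    qed
    have iv: "1 - \<bar>e\<bar> \<le> 1" "1 \<le> 1 + \<bar>e\<bar>" "1 - \<bar>e\<bar> \<le> 1 + e" "1 + e \<le> 1 + \<bar>e\<bar>" "1 + e \<noteq> 1"
      using False by auto
    obtain t where t: "(if 1+e < 1 then 1+e < t \<and> t < 1 else 1 < t \<and> t < 1+e)"
      "w (1+e) = (\<Sum>m<2. (diff m 1 / fact m) * ((1+e) - 1)^m) + (diff 2 t / fact 2) * ((1+e) - 1)^2"
      using Taylor[of 2 diff w "1 - \<bar>e\<bar>" "1 + \<bar>e\<bar>" 1 "1+e", OF _ _ D iv]
      by (auto simp: diff_def)
    have "\<bar>t - 1\<bar> < d0" using t(1) e by (auto simp: d_def split: if_splits)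
    then have "\<bar>w'' t - w'' 1\<bar> < 2*c" using d0 by auto
    have "w (1+e) = w'' t / 2 * e^2" using t(2) w1 w'1
      by (simp add: diff_def numeral_2_eq_2 lessThan_Suc)
    then have "w (1+e) - w'' 1 / 2 * e^2 = (w'' t - w'' 1) / 2 * e^2"
      by (simp add: algebra_simps)
    then have "\<bar>w (1+e) - w'' 1 / 2 * e^2\<bar> = \<bar>w'' t - w'' 1\<bar> / 2 * e^2"
      by (metis abs_divide abs_mult abs_numeral abs_power2)
    also have "\<dots> \<le> c * e^2" using \<open>\<bar>w'' t - w'' 1\<bar> < 2*c\<close>
      mult_right_mono[of "\<bar>w'' t - w'' 1\<bar> / 2" c "e^2"] by auto
    finally show ?thesis .
  qed
  ultimately show ?thesis by blast
qed

lemma ident: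
  fixes a c q g11 g12 g21 g22 :: real
  assumes h1: "a^2 + c^2 = 1" and h2: "q^2 = 3"
  defines "p \<equiv> (\<lambda>x y. x*(g11*x+g12*y) + y*(g21*x+g22*y))"
  shows "(p a c)^2 + (p (a/2 - c*q/2) (c/2 + a*q/2))^2 + (p (a/2 - c*q/2 - a) (c/2 + a*q/2 - c))^2 =
    3/8 * (3*g11^2 + 3*g22^2 + 2*g11*g22 + 4*((g12+g21)/2)^2)"
proof -
  define A where "A = p a c"
  define B where "B = p (-c) a"
  define C where "C = a*(g11*(-c)+g12*a) + c*(g21*(-c)+g22*a) + (-c)*(g11*a+g12*c) + a*(g21*a+g22*c)"
  have e2: "p (a/2 - c*q/2) (c/2 + a*q/2) = A/4 + q^2/4*B + q/4*C"
    unfolding A_def B_def C_def p_def by (simp add: field_simps power2_eq_square) (simp add: algebra_simps)?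
  have e3: "p (a/2 - c*q/2 - a) (c/2 + a*q/2 - c) = A/4 + q^2/4*B - q/4*C"
    unfolding A_def B_def C_def p_def by (simp add: field_simps power2_eq_square) (simp add: algebra_simps)?
  have eAB: "A + B = (a^2+c^2)*(g11+g22)"
    unfolding A_def B_def p_def by (simp add: field_simps power2_eq_square) (simp add: algebra_simps)?
  have eABC: "(A - B)^2 + C^2 = (a^2+c^2)^2*((g11-g22)^2 + (g12+g21)^2)"
    unfolding A_def B_def C_def p_def by (simp add: field_simps power2_eq_square) (simp add: algebra_simps)?
  have "(p a c)^2 + (p (a/2 - c*q/2) (c/2 + a*q/2))^2 + (p (a/2 - c*q/2 - a) (c/2 + a*q/2 - c))^2
     = A^2 + 2*(A/4 + q^2/4*B)^2 + 2*q^2*C^2/16"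
    unfolding e2 e3 A_def[symmetric] by (simp add: field_simps power2_eq_square) (simp add: algebra_simps)?
  also have "\<dots> = 3/8 * (2*(A+B)^2 + (A-B)^2 + C^2)"
    unfolding h2 by (simp add: field_simps power2_eq_square) (simp add: algebra_simps)?
  also have "\<dots> = 3/8 * (2*(g11+g22)^2 + (g11-g22)^2 + (g12+g21)^2)"
    using eAB eABC h1 by simp
  also have "\<dots> = 3/8 * (3*g11^2 + 3*g22^2 + 2*g11*g22 + 4*((g12+g21)/2)^2)"
    by (simp add: field_simps power2_eq_square) (simp add: algebra_simps)?
  finally show ?thesis .
qed

lemma normG2: "(norm (G::real^2^2))^2 = (G$1$1)^2+(G$1$2)^2+(G$2$1)^2+(G$2$2)^2"
  by (simp only: power2_norm_eq_inner) (simp add: inner_vec_def sum_2 power2_eq_square)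

lemma normv2: "(norm (v::real^2))^2 = (v$1)^2+(v$2)^2"
  by (simp only: power2_norm_eq_inner) (simp add: inner_vec_def sum_2 power2_eq_square)

lemma Gv_comp: "(G *v (x::real^2)) $ 1 = G$1$1 * x$1 + G$1$2 * x$2" "(G *v (x::real^2)) $ 2 = G$2$1 * x$1 + G$2$2 * x$2"
  by (simp_all add: matrix_vector_mult_def sum_2)

lemma cs2: fixes a b c d x y :: real
  shows "(a*x+b*y)^2+(c*x+d*y)^2 \<le> (a^2+b^2+c^2+d^2)*(x^2+y^2)"
proof -
  have "(a^2+b^2+c^2+d^2)*(x^2+y^2) = (a*x+b*y)^2+(c*x+d*y)^2 + (a*y-b*x)^2 + (c*y-d*x)^2"
    by (simp add: algebra_simps power2_eq_square)
  then show ?thesis by (smt (verit) zero_le_power2)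
qed

lemma norm_Gv: "norm (G *v (v::real^2)) \<le> norm (G::real^2^2) * norm v"
proof -
  have "(norm (G *v v))^2 \<le> (norm G * norm v)^2"
    unfolding power_mult_distrib normG2 normv2 Gv_comp by (rule cs2)
  then show ?thesis by (simp add: power2_le_iff_abs_le)
qed

lemma dir_geom:
  fixes G :: "real^2^2" and v :: "real^2"
  assumes v1: "norm v = 1"
  shows "\<bar>norm ((mat 1 + G) *v v) - 1\<bar> \<le> norm G"
    "\<bar>v \<bullet> (G *v v)\<bar> \<le> norm G"
    "\<bar>norm ((mat 1 + G) *v v) - 1 - v \<bullet> (G *v v)\<bar> \<le> 2 * (norm G)^2"
proof -
  define u where "u = G *v v"
  define n where "n = norm ((mat 1 + G) *v v)"
  define p where "p = v \<bullet> u"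
  have nu: "norm u \<le> norm G" using norm_Gv[of G v] v1 by (simp add: u_def)
  have xe: "(mat 1 + G) *v v = v + u"
    by (simp add: u_def matrix_vector_mult_add_rdistrib)
  have "\<bar>n - 1\<bar> \<le> norm u" unfolding n_def xe using v1
    by (metis norm_triangle_ineq3 norm_triangle_ineq add_diff_cancel_left' abs_le_iff diff_le_eq
        norm_minus_commute add.commute)
  then show g1: "\<bar>norm ((mat 1 + G) *v v) - 1\<bar> \<le> norm G" using nu n_def by linarith
  have pu: "\<bar>p\<bar> \<le> norm u" unfolding p_def using Cauchy_Schwarz_ineq2[of v u] v1 by simp
  then show "\<bar>v \<bullet> (G *v v)\<bar> \<le> norm G" using nu p_def u_def by simp
  have nsq: "n^2 = 1 + 2*p + (norm u)^2" unfolding n_def xe p_def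
    using v1 power2_norm_eq_inner[of v] by (simp add: power2_norm_eq_inner inner_add_left inner_add_right inner_commute)
  have n0: "n \<ge> 0" by (simp add: n_def)
  have key: "(n+1)*(n-1-p) = p*(1-n) + (norm u)^2" using nsq
    by (simp add: algebra_simps power2_eq_square)
  have "\<bar>p*(1-n)\<bar> \<le> norm G * norm G"
    unfolding abs_mult using pu nu g1 n_def
    by (intro mult_mono) (auto simp: abs_minus_commute)
  moreover have "(norm u)^2 \<le> (norm G)^2" using nu by (simp add: power_mono)
  moreover have "0 \<le> (norm u)^2" by simp
  ultimately have "\<bar>(n+1)*(n-1-p)\<bar> \<le> 2*(norm G)^2" unfolding key power2_eq_square
    by (smt (verit))
  moreover have "\<bar>n-1-p\<bar> \<le> \<bar>(n+1)*(n-1-p)\<bar>" using n0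
    by (simp add: abs_mult mult_le_cancel_right1 )
  ultimately show "\<bar>norm ((mat 1 + G) *v v) - 1 - v \<bullet> (G *v v)\<bar> \<le> 2 * (norm G)^2"
    using n_def p_def u_def by simp
qed




lemma dir_est:
  fixes w w' w'' :: "real \<Rightarrow> real" and v :: "real^2"
  assumes dpos: "\<delta> > 0"
    and d1: "\<forall>r\<in>ball 1 \<delta>. (w has_real_derivative w' r) (at r)"
    and d2: "\<forall>r\<in>ball 1 \<delta>. (w' has_real_derivative w'' r) (at r)"
    and C2: "continuous_on (ball 1 \<delta>) w''"
    and w1: "w 1 = 0" and w'1: "w' 1 = 0" and cpos: "c > 0" and v1: "norm v = 1"
  shows "\<exists>d>0. \<forall>G::real^2^2. norm G < d \<longrightarrow>
     \<bar>w (norm ((mat 1 + G) *v v)) - w'' 1 / 2 * (v \<bullet> (G *v v))^2\<bar> \<le> c * (norm G)^2"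
proof -
  obtain d1 where d1p: "d1 > 0" and d1e: "\<forall>e. \<bar>e\<bar> < d1 \<longrightarrow> \<bar>w (1+e) - w'' 1 / 2 * e^2\<bar> \<le> c/2 * e^2"
    using taylor1[OF dpos d1 d2 C2 w1 w'1, of "c/2"] cpos by auto
  define K where "K = \<bar>w'' 1\<bar> + 1"
  have Kp: "K > 0" by (simp add: K_def add_nonneg_pos)
  define d where "d = min d1 (c / (4*K))"
  have "d > 0" using d1p cpos Kp by (simp add: d_def)
  moreover have "\<bar>w (norm ((mat 1 + G) *v v)) - w'' 1 / 2 * (v \<bullet> (G *v v))^2\<bar> \<le> c * (norm G)^2"
    if gd: "norm G < d" for G :: "real^2^2"
  proof -
    define g where "g = norm G"
    define e where "e = norm ((mat 1 + G) *v v) - 1"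
    define p where "p = v \<bullet> (G *v v)"
    have eg: "\<bar>e\<bar> \<le> g" and pg: "\<bar>p\<bar> \<le> g" and epg: "\<bar>e - p\<bar> \<le> 2*g^2"
      using dir_geom[OF v1, of G] by (simp_all add: e_def p_def g_def)
    have g0: "g \<ge> 0" by (simp add: g_def)
    have gd1: "g < d1" and gK: "g < c/(4*K)" using gd by (auto simp: g_def d_def)
    have t1: "\<bar>w (1+e) - w'' 1 / 2 * e^2\<bar> \<le> c/2 * e^2" using d1e eg gd1 by auto
    have "e^2 \<le> g^2" using eg by (simp add: abs_le_square_iff power2_le_iff_abs_le g0)
    then have "c/2 * e^2 \<le> c/2 * g^2" using cpos by (intro mult_left_mono) auto
    then have t1': "\<bar>w (1+e) - w'' 1 / 2 * e^2\<bar> \<le> c/2 * g^2" using t1 by linarith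
    have "\<bar>e + p\<bar> \<le> 2*g" using eg pg by linarith
    then have "\<bar>e^2 - p^2\<bar> \<le> 2*g^2 * (2*g)"
    proof -
      have "e^2 - p^2 = (e - p) * (e + p)" by (simp add: power2_eq_square algebra_simps)
      then have "\<bar>e^2 - p^2\<bar> = \<bar>e - p\<bar> * \<bar>e + p\<bar>" by (simp add: abs_mult)
      also have "\<dots> \<le> 2*g^2 * (2*g)" using epg \<open>\<bar>e + p\<bar> \<le> 2*g\<close>
        by (intro mult_mono) auto
      finally show ?thesis .
    qed
    then have "\<bar>w'' 1 / 2 * (e^2 - p^2)\<bar> \<le> K/2 * (2*g^2 * (2*g))"
      unfolding abs_mult K_def by (intro mult_mono) auto
    also have "\<dots> = (2*K*g) * g^2" by (simp add: algebra_simps power2_eq_square)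
    also have "\<dots> \<le> (c/2) * g^2"
    proof (intro mult_right_mono)
      show "2*K*g \<le> c/2" using gK Kp by (simp add: field_simps)
    qed simp
    finally have t2: "\<bar>w'' 1 / 2 * (e^2 - p^2)\<bar> \<le> c/2 * g^2" .
    have "\<bar>w (1+e) - w'' 1 / 2 * p^2\<bar> \<le> c * g^2"
    proof -
      have "w (1+e) - w'' 1 / 2 * p^2 = (w (1+e) - w'' 1 / 2 * e^2) + w'' 1 / 2 * (e^2 - p^2)"
        by (simp add: algebra_simps)
      then have "\<bar>w (1+e) - w'' 1 / 2 * p^2\<bar> \<le> \<bar>w (1+e) - w'' 1 / 2 * e^2\<bar> + \<bar>w'' 1 / 2 * (e^2 - p^2)\<bar>"
        by (metis abs_triangle_ineq)
      then show ?thesis using t1' t2 by linarith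
    qed
    then show ?thesis by (simp add: e_def p_def g_def)
  qed
  ultimately show ?thesis by blast
qed




lemma rot_entries:
  assumes "rotation_matrix (R::real^2^2)"
  shows "R$1$2 = - R$2$1" "R$2$2 = R$1$1" "(R$1$1)^2 + (R$2$1)^2 = 1"
proof -
  have o: "transpose R ** R = mat 1" and dt: "det R = 1"
    using assms by (auto simp: rotation_matrix_def orthogonal_matrix_def)
  have e11: "R$1$1 * R$1$1 + R$2$1 * R$2$1 = 1"
    using arg_cong[OF o, of "\<lambda>M. M$1$1"] by (simp add: matrix_matrix_mult_def sum_2 transpose_def mat_def)
  have e22: "R$1$2 * R$1$2 + R$2$2 * R$2$2 = 1"
    using arg_cong[OF o, of "\<lambda>M. M$2$2"] by (simp add: matrix_matrix_mult_def sum_2 transpose_def mat_def)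
  have e12: "R$1$1 * R$1$2 + R$2$1 * R$2$2 = 0"
    using arg_cong[OF o, of "\<lambda>M. M$1$2"] by (simp add: matrix_matrix_mult_def sum_2 transpose_def mat_def)
  have d: "R$1$1 * R$2$2 - R$1$2 * R$2$1 = 1" using dt by (simp add: det_2)
  have "(R$1$1 - R$2$2)^2 + (R$1$2 + R$2$1)^2 = 0"
    using e11 e22 d by (simp add: power2_eq_square algebra_simps)
  then show "R$1$2 = - R$2$1" "R$2$2 = R$1$1"
    by (smt (verit) sum_power2_eq_zero_iff)+
  show "(R$1$1)^2 + (R$2$1)^2 = 1" using e11 by (simp add: power2_eq_square)
qed

lemma Q_dirs:
  assumes rot: "rotation_matrix (R::real^2^2)"
  shows "Qform \<alpha> G / 2 = \<alpha>/4 * ((lat_v1 R \<bullet> (G *v lat_v1 R))^2 + (lat_v2 R \<bullet> (G *v lat_v2 R))^2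
          + ((lat_v2 R - lat_v1 R) \<bullet> (G *v (lat_v2 R - lat_v1 R)))^2)"
    "norm (lat_v1 R) = 1" "norm (lat_v2 R) = 1" "norm (lat_v2 R - lat_v1 R) = 1"
proof -
  define a where "a = R$1$1"
  define c where "c = R$2$1"
  have R12: "R$1$2 = - c" and R22: "R$2$2 = a" and ac: "a^2 + c^2 = 1"
    using rot_entries[OF rot] by (auto simp: a_def c_def)
  have s3: "(sqrt 3)^2 = (3::real)" by simp
  have v1c: "lat_v1 R $ 1 = a" "lat_v1 R $ 2 = c"
    by (simp_all add: lat_v1_def Gv_comp a_def c_def)
  have v2c: "lat_v2 R $ 1 = a/2 - c * sqrt 3/2" "lat_v2 R $ 2 = c/2 + a * sqrt 3/2"
    by (simp_all add: lat_v2_def Gv_comp a_def c_def R12 R22)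
  have ip: "x \<bullet> (G *v x) = x$1 * (G$1$1 * x$1 + G$1$2 * x$2) + x$2 * (G$2$1 * x$1 + G$2$2 * x$2)" for x :: "real^2"
    by (simp add: inner_vec_def sum_2 Gv_comp)
  have nx: "norm x = 1 \<longleftrightarrow> (x$1)^2 + (x$2)^2 = 1" for x :: "real^2"
    by (metis normv2 norm_ge_zero power_one real_sqrt_unique real_sqrt_one)
  show "norm (lat_v1 R) = 1" unfolding nx v1c using ac .
  show "norm (lat_v2 R) = 1" unfolding nx v2c using ac s3
    by (simp add: power2_eq_square field_simps; smt (verit))
  show "norm (lat_v2 R - lat_v1 R) = 1" unfolding nx using ac s3
    by (simp add: v1c v2c power2_eq_square field_simps; smt (verit))
  show "Qform \<alpha> G / 2 = \<alpha>/4 * ((lat_v1 R \<bullet> (G *v lat_v1 R))^2 + (lat_v2 R \<bullet> (G *v lat_v2 R))^2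
          + ((lat_v2 R - lat_v1 R) \<bullet> (G *v (lat_v2 R - lat_v1 R)))^2)"
    unfolding ip using ident[OF ac s3, of "G$1$1" "G$1$2" "G$2$1" "G$2$2"]
    by (simp add: v1c v2c Qform_def)
qed



lemma Q_sym: "Qform \<alpha> G = Qform \<alpha> ((1/2) *\<^sub>R (transpose G + G))"
  by (simp add: Qform_def transpose_def add.commute)

lemma Pid: fixes u a b c d a' b' c' d' :: real
  defines "P \<equiv> (\<lambda>a b c d::real. 3*a^2 + 3*d^2 + 2*a*d + (b+c)^2)"
  shows "P (u*a + (1-u)*a') (u*b + (1-u)*b') (u*c + (1-u)*c') (u*d + (1-u)*d')
    = u * P a b c d + (1-u) * P a' b' c' d' - u*(1-u) * P (a-a') (b-b') (c-c') (d-d')"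
  unfolding P_def by algebra

lemma Qform_P: "Qform \<alpha> G = 3*\<alpha>/16 * (3*(G$1$1)^2 + 3*(G$2$2)^2 + 2*(G$1$1)*(G$2$2) + (G$1$2 + G$2$1)^2)"
  unfolding Qform_def by (simp add: power_divide)

lemma Q_nonneg: assumes "\<alpha> > 0" shows "Qform \<alpha> G \<ge> 0"
proof -
  have "3 * (G$1$1)^2 + 3 * (G$2$2)^2 + 2 * (G$1$1) * (G$2$2) + 4 * ((G$1$2 + G$2$1) / 2)^2
     = 2 * (G$1$1)^2 + 2 * (G$2$2)^2 + (G$1$1 + G$2$2)^2 + 4 * ((G$1$2 + G$2$1) / 2)^2"
    by (simp add: power2_eq_square algebra_simps)
  also have "\<dots> \<ge> 0" by simp
  finally show ?thesis using assms unfolding Qform_def by simp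
qed

lemma Q_pos: assumes "\<alpha> > 0" "transpose G = G" "G \<noteq> 0" shows "Qform \<alpha> G > 0"
proof -
  have sym: "G$2$1 = G$1$2" using arg_cong[OF assms(2), of "\<lambda>M. M$1$2"] by (simp add: transpose_def)
  have eq: "3 * (G$1$1)^2 + 3 * (G$2$2)^2 + 2 * (G$1$1) * (G$2$2) + 4 * ((G$1$2 + G$2$1) / 2)^2
     = 2 * (G$1$1)^2 + 2 * (G$2$2)^2 + (G$1$1 + G$2$2)^2 + 4 * (G$1$2)^2"
    by (simp add: sym power2_eq_square algebra_simps)
  have "G$1$1 \<noteq> 0 \<or> G$2$2 \<noteq> 0 \<or> G$1$2 \<noteq> 0"
  proof (rule ccontr)
    assume "\<not> ?thesis"
    then have "G = 0" using sym by (simp add: vec_eq_iff forall_2)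
    then show False using assms(3) by simp
  qed
  then have "2 * (G$1$1)^2 + 2 * (G$2$2)^2 + (G$1$1 + G$2$2)^2 + 4 * (G$1$2)^2 > 0"
    by (auto simp: add_pos_nonneg add_nonneg_pos)
  then show ?thesis using assms(1) unfolding Qform_def eq by simp
qed

lemma Q_comb: assumes "u + v = 1"
  shows "Qform \<alpha> (u *\<^sub>R x + v *\<^sub>R y) = u * Qform \<alpha> x + v * Qform \<alpha> y - u * v * Qform \<alpha> (x - y)"
proof -
  have v: "v = 1 - u" using assms by simp
  have "3*\<alpha>/16 * (3*((u *\<^sub>R x + (1-u) *\<^sub>R y)$1$1)^2 + 3*((u *\<^sub>R x + (1-u) *\<^sub>R y)$2$2)^2
     + 2*((u *\<^sub>R x + (1-u) *\<^sub>R y)$1$1)*((u *\<^sub>R x + (1-u) *\<^sub>R y)$2$2)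
     + ((u *\<^sub>R x + (1-u) *\<^sub>R y)$1$2 + (u *\<^sub>R x + (1-u) *\<^sub>R y)$2$1)^2)
     = 3*\<alpha>/16 * (u * (3*(x$1$1)^2 + 3*(x$2$2)^2 + 2*(x$1$1)*(x$2$2) + (x$1$2 + x$2$1)^2)
       + (1-u) * (3*(y$1$1)^2 + 3*(y$2$2)^2 + 2*(y$1$1)*(y$2$2) + (y$1$2 + y$2$1)^2)
       - u*(1-u) * (3*((x-y)$1$1)^2 + 3*((x-y)$2$2)^2 + 2*((x-y)$1$1)*((x-y)$2$2) + ((x-y)$1$2 + (x-y)$2$1)^2))"
    using Pid[where u=u and a="x$1$1" and a'="y$1$1" and b="x$1$2" and b'="y$1$2" and c="x$2$1" and c'="y$2$1" and d="x$2$2" and d'="y$2$2"] by simp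
  moreover have lin: "\<And>k A B C::real. k*(u*A + (1-u)*B - u*(1-u)*C) = u*(k*A) + (1-u)*(k*B) - u*(1-u)*(k*C)"
    by algebra
  ultimately show ?thesis unfolding v Qform_P by metis
qed

lemma Q_convex: assumes "\<alpha> > 0" shows "convex_on UNIV (Qform \<alpha>)"
  unfolding convex_on_def
proof (intro conjI ballI allI impI)
  show "convex (UNIV :: (real^2^2) set)" by simp
  fix x y :: "real^2^2" and u v :: real assume h: "0 \<le> u" "0 \<le> v" "u + v = 1"
  have "0 \<le> u * v * Qform \<alpha> (x - y)" using h Q_nonneg[OF assms] by simp
  then show "Qform \<alpha> (u *\<^sub>R x + v *\<^sub>R y) \<le> u * Qform \<alpha> x + v * Qform \<alpha> y"
    using Q_comb[OF h(3)] by simp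
qed

lemma Q_strict: assumes "\<alpha> > 0" shows "strictly_convex_on {G. transpose G = G} (Qform \<alpha>)"
  unfolding strictly_convex_on_def
proof (intro ballI allI impI)
  fix x y :: "real^2^2" and t :: real
  assume x: "x \<in> {G. transpose G = G}" and y: "y \<in> {G. transpose G = G}" and ne: "x \<noteq> y"
    and t: "0 < t \<and> t < 1"
  have "transpose (x - y) = x - y" using x y by (simp add: transpose_def vec_eq_iff)
  then have "Qform \<alpha> (x - y) > 0" using Q_pos[OF assms] ne by simp
  then have "0 < (1 - t) * t * Qform \<alpha> (x - y)" using t by simp
  then show "Qform \<alpha> ((1 - t) *\<^sub>R x + t *\<^sub>R y) < (1 - t) * Qform \<alpha> x + t * Qform \<alpha> y"
    using Q_comb[of "1 - t" t \<alpha> x y] by simp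
qed



theorem lemma3p2:
  fixes W :: "real \<Rightarrow> ereal" and w w' w'' :: "real \<Rightarrow> real"
    and \<delta> \<alpha> :: real and \<beta> :: ereal and R :: "real^2^2"
  assumes rot: "rotation_matrix R"
    and W_nonneg: "\<forall>r\<ge>0. W r \<ge> 0"
    and W_zero: "\<forall>r\<ge>0. W r = 0 \<longleftrightarrow> r = 1"
    and W_cont: "continuous_on {0..} W"
    and W_lim: "(W \<longlongrightarrow> \<beta>) at_top"
    and \<delta>_pos: "\<delta> > 0"
    and W_loc: "\<forall>r\<in>ball 1 \<delta>. W r = ereal (w r)"
    and w_d1: "\<forall>r\<in>ball 1 \<delta>. (w has_real_derivative w' r) (at r)"
    and w_d2: "\<forall>r\<in>ball 1 \<delta>. (w' has_real_derivative w'' r) (at r)"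
    and w_C2: "continuous_on (ball 1 \<delta>) w''"
    and \<alpha>_def: "\<alpha> = w'' 1"
    and \<alpha>_pos: "\<alpha> > 0"
  shows "((\<lambda>G. real_of_ereal (W_tri W R (mat 1 + G)) - Qform \<alpha> G / 2)
            \<in> o[at 0](\<lambda>G. (norm G)^2))
    \<and> (\<forall>G. Qform \<alpha> G = Qform \<alpha> ((1/2) *\<^sub>R (transpose G + G)))
    \<and> (\<forall>G. Qform \<alpha> G \<ge> 0)
    \<and> convex_on UNIV (Qform \<alpha>)
    \<and> (\<forall>G. transpose G = G \<and> G \<noteq> 0 \<longrightarrow> Qform \<alpha> G > 0)
    \<and> strictly_convex_on {G. transpose G = G} (Qform \<alpha>)"
proof -
  have b1: "1 \<in> ball (1::real) \<delta>" using \<delta>_pos by simp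
  have "W 1 = 0" using W_zero by simp
  moreover have "W 1 = ereal (w 1)" using W_loc b1 by blast
  ultimately have w1: "w 1 = 0" by (simp add: zero_ereal_def)
  have Dw: "DERIV w 1 :> w' 1" using w_d1 b1 by blast
  have mp: "0 < min \<delta> 1" using \<delta>_pos by simp
  have mn: "\<forall>y. \<bar>1 - y\<bar> < min \<delta> 1 \<longrightarrow> w 1 \<le> w y"
  proof (intro allI impI)
    fix y :: real assume "\<bar>1 - y\<bar> < min \<delta> 1"
    then have "y \<in> ball 1 \<delta>" "y \<ge> 0" by (auto simp: dist_real_def)
    then have "W y \<ge> 0" "W y = ereal (w y)" using W_loc W_nonneg by blast+
    then show "w 1 \<le> w y" using w1 by simp
  qed
  have w'1: "w' 1 = 0" using DERIV_local_min[OF Dw mp mn] .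
  define v1 where "v1 = lat_v1 R"
  define v2 where "v2 = lat_v2 R"
  define v3 where "v3 = lat_v2 R - lat_v1 R"
  have nv: "norm v1 = 1" "norm v2 = 1" "norm v3 = 1"
    using Q_dirs[OF rot] by (simp_all add: v1_def v2_def v3_def)
  have osmall: "(\<lambda>G. real_of_ereal (W_tri W R (mat 1 + G)) - Qform \<alpha> G / 2) \<in> o[at 0](\<lambda>G. (norm G)^2)"
  proof (rule landau_o.smallI)
    fix c :: real assume cpos: "c > 0"
    then have c2: "c/2 > 0" by simp
    obtain d1 where d1: "d1 > 0" "\<forall>G::real^2^2. norm G < d1 \<longrightarrow>
        \<bar>w (norm ((mat 1 + G) *v v1)) - w'' 1 / 2 * (v1 \<bullet> (G *v v1))^2\<bar> \<le> c/2 * (norm G)^2"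
      using dir_est[OF \<delta>_pos w_d1 w_d2 w_C2 w1 w'1 c2 nv(1)] by blast
    obtain d2 where d2: "d2 > 0" "\<forall>G::real^2^2. norm G < d2 \<longrightarrow>
        \<bar>w (norm ((mat 1 + G) *v v2)) - w'' 1 / 2 * (v2 \<bullet> (G *v v2))^2\<bar> \<le> c/2 * (norm G)^2"
      using dir_est[OF \<delta>_pos w_d1 w_d2 w_C2 w1 w'1 c2 nv(2)] by blast
    obtain d3 where d3: "d3 > 0" "\<forall>G::real^2^2. norm G < d3 \<longrightarrow>
        \<bar>w (norm ((mat 1 + G) *v v3)) - w'' 1 / 2 * (v3 \<bullet> (G *v v3))^2\<bar> \<le> c/2 * (norm G)^2"
      using dir_est[OF \<delta>_pos w_d1 w_d2 w_C2 w1 w'1 c2 nv(3)] by blast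
    define d where "d = min \<delta> (min d1 (min d2 d3))"
    have dpos: "d > 0" using \<delta>_pos d1 d2 d3 by (simp add: d_def)
    have main: "norm (real_of_ereal (W_tri W R (mat 1 + G)) - Qform \<alpha> G / 2) \<le> c * norm ((norm G)^2)"
      if gd: "norm G < d" for G :: "real^2^2"
    proof -
      define n1 where "n1 = norm ((mat 1 + G) *v v1)"
      define n2 where "n2 = norm ((mat 1 + G) *v v2)"
      define n3 where "n3 = norm ((mat 1 + G) *v v3)"
      have "\<bar>n1 - 1\<bar> \<le> norm G" "\<bar>n2 - 1\<bar> \<le> norm G" "\<bar>n3 - 1\<bar> \<le> norm G"
        using dir_geom(1)[OF nv(1)] dir_geom(1)[OF nv(2)] dir_geom(1)[OF nv(3)]
        by (simp_all add: n1_def n2_def n3_def)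
      moreover have "norm G < \<delta>" using gd by (simp add: d_def)
      ultimately have "n1 \<in> ball 1 \<delta>" "n2 \<in> ball 1 \<delta>" "n3 \<in> ball 1 \<delta>"
        by (auto simp: dist_real_def)
      then have Wn: "W n1 = ereal (w n1)" "W n2 = ereal (w n2)" "W n3 = ereal (w n3)"
        using W_loc by auto
      define p1 where "p1 = v1 \<bullet> (G *v v1)"
      define p2 where "p2 = v2 \<bullet> (G *v v2)"
      define p3 where "p3 = v3 \<bullet> (G *v v3)"
      have "W_tri W R (mat 1 + G) = ereal (1/2) * (W n1 + W n2 + W n3)"
        by (simp add: W_tri_def n1_def n2_def n3_def v1_def v2_def v3_def)
      also have "\<dots> = ereal ((w n1 + w n2 + w n3) / 2)" by (simp add: Wn)
      finally have rw: "real_of_ereal (W_tri W R (mat 1 + G)) = (w n1 + w n2 + w n3) / 2" by simp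
      have Qd: "Qform \<alpha> G / 2 = w'' 1/4 * (p1^2 + p2^2 + p3^2)"
        using Q_dirs(1)[OF rot, of \<alpha> G] unfolding p1_def p2_def p3_def v1_def v2_def v3_def \<alpha>_def .
      have eq: "real_of_ereal (W_tri W R (mat 1 + G)) - Qform \<alpha> G / 2
          = ((w n1 - w'' 1 / 2 * p1^2) + (w n2 - w'' 1 / 2 * p2^2) + (w n3 - w'' 1 / 2 * p3^2)) / 2"
        unfolding rw Qd by (simp add: algebra_simps)
      have A: "\<bar>w n1 - w'' 1 / 2 * p1^2\<bar> \<le> c/2 * (norm G)^2"
        using d1 gd by (simp add: n1_def p1_def d_def)
      have B: "\<bar>w n2 - w'' 1 / 2 * p2^2\<bar> \<le> c/2 * (norm G)^2"
        using d2 gd by (simp add: n2_def p2_def d_def)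
      have C: "\<bar>w n3 - w'' 1 / 2 * p3^2\<bar> \<le> c/2 * (norm G)^2"
        using d3 gd by (simp add: n3_def p3_def d_def)
      have P: "0 \<le> c * (norm G)^2" using cpos by simp
      have "\<bar>((w n1 - w'' 1 / 2 * p1^2) + (w n2 - w'' 1 / 2 * p2^2) + (w n3 - w'' 1 / 2 * p3^2)) / 2\<bar>
          \<le> (\<bar>w n1 - w'' 1 / 2 * p1^2\<bar> + \<bar>w n2 - w'' 1 / 2 * p2^2\<bar> + \<bar>w n3 - w'' 1 / 2 * p3^2\<bar>) / 2"
        by (simp add: abs_triangle_ineq add_mono order_trans[OF abs_triangle_ineq])
      also have "\<dots> \<le> c * (norm G)^2"
      proof -
        have h: "c/2 * (norm G)^2 = (c * (norm G)^2) / 2" by simp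
        have gen: "\<And>x y z K::real. x \<le> K/2 \<Longrightarrow> y \<le> K/2 \<Longrightarrow> z \<le> K/2 \<Longrightarrow> 0 \<le> K \<Longrightarrow> (x+y+z)/2 \<le> K"
          by (simp add: field_simps)
        show ?thesis using A B C P unfolding h by (rule gen)
      qed
      finally show ?thesis unfolding eq real_norm_def by simp
    qed
    show "\<forall>\<^sub>F G in at 0. norm (real_of_ereal (W_tri W R (mat 1 + G)) - Qform \<alpha> G / 2) \<le> c * norm ((norm G)^2)"
      unfolding eventually_at using dpos main by (auto simp: dist_norm)
  qed
  show ?thesis
    using osmall Q_sym Q_nonneg[OF \<alpha>_pos] Q_convex[OF \<alpha>_pos] Q_pos[OF \<alpha>_pos] Q_strict[OF \<alpha>_pos]
    by blast
qed

end
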